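(* Let $\kappa>-1$, $\Gamma$ a constant real $n\times r$ matrix, and assume that $\kappa=1$ or $\Gamma=0$. Then the equations $$\dot X=P-(1+2\kappa)XP^TX,\qquad \dot P=(1+2\kappa)PX^TP-\Gamma+X\Lambda,\qquad \Lambda=\tfrac12\left(-2P^TP+X^T\Gamma+\Gamma^TX\right)$$ on $T^*V(n,r)$ are equivalent to the matrix equations $$\frac{d}{dt}L(\lambda)=[L(\lambda),A(\lambda)]$$ with spectral parameter $\lambda$, where $L(\lambda),A(\lambda)\in so(n+r)$ are $$L(\lambda)=\begin{pmatrix}-\lambda\Phi & X+\lambda^2\Gamma\\ -X^T-\lambda^2\Gamma^T & \lambda\kappa\Psi\end{pmatrix},\qquad A(\lambda)=\begin{pmatrix}-\Phi & \lambda\Gamma\\ -\lambda\Gamma^T & \kappa\Psi\end{pmatrix},$$ with $\Phi=PX^T-XP^T$ and $\Psi=X^TP-P^TX$.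
   Context: $V(n,r)=\{X\in M_{n,r}(\mathbb R):X^TX=\mathbf I_r\}$, and $T^*V(n,r)$ is realized as the set of pairs $(X,P)$ of real $n\times r$ matrices with $X^TX=\mathbf I_r$, $X^TP+P^TX=0$. The given equations are the Hamiltonian flow of the pendulum Hamiltonian $\frac12\operatorname{tr}(P^TP)-\frac{1+2\kappa}{2}\operatorname{tr}((XP^T)^2)+\operatorname{tr}(X^T\Gamma)$ (for $\Gamma=0$, the geodesic flow of the Jensen metric $ds^2_\kappa$). *)

theory Defs
  imports "HOL-Analysis.Analysis"
begin

text \<open>Matrices are rendered as real^'c^'r (rows indexed by 'r, columns by 'c).
  An (n+r)x(n+r) block matrix is indexed by the sum type 'n + 'r.\<close>

definition blockmat ::
  "real^'r^'n \<Rightarrow> real^'c^'n \<Rightarrow> real^'r^'c \<Rightarrow> real^'c^'c \<Rightarrow> real^('r + 'c)^('n + 'c)"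
  where "blockmat A B C D = (\<chi> i j. (case i of
            Inl a \<Rightarrow> (case j of Inl b \<Rightarrow> A $ a $ b | Inr b \<Rightarrow> B $ a $ b)
          | Inr a \<Rightarrow> (case j of Inl b \<Rightarrow> C $ a $ b | Inr b \<Rightarrow> D $ a $ b)))"

text \<open>Cotangent bundle of the Stiefel manifold V(n,r), realized as pairs (X,P).\<close>
definition in_TStiefel :: "real^'r^'n \<Rightarrow> real^'r^'n \<Rightarrow> bool"
  where "in_TStiefel X P \<longleftrightarrow> transpose X ** X = mat 1 \<and> transpose X ** P + transpose P ** X = 0"

definition Phi_mat :: "real^'r^'n \<Rightarrow> real^'r^'n \<Rightarrow> real^'n^'n"
  where "Phi_mat X P = P ** transpose X - X ** transpose P"

definition Psi_mat :: "real^'r^'n \<Rightarrow> real^'r^'n \<Rightarrow> real^'r^'r"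
  where "Psi_mat X P = transpose X ** P - transpose P ** X"

definition Lax_L :: "real \<Rightarrow> real^'r^'n \<Rightarrow> real \<Rightarrow> real^'r^'n \<Rightarrow> real^'r^'n \<Rightarrow> real^('n + 'r)^('n + 'r)"
  where "Lax_L \<kappa> \<Gamma> lam X P = blockmat (- (lam *\<^sub>R Phi_mat X P)) (X + lam\<^sup>2 *\<^sub>R \<Gamma>)
            (- transpose X - lam\<^sup>2 *\<^sub>R transpose \<Gamma>) ((lam * \<kappa>) *\<^sub>R Psi_mat X P)"

definition Lax_A :: "real \<Rightarrow> real^'r^'n \<Rightarrow> real \<Rightarrow> real^'r^'n \<Rightarrow> real^'r^'n \<Rightarrow> real^('n + 'r)^('n + 'r)"
  where "Lax_A \<kappa> \<Gamma> lam X P = blockmat (- Phi_mat X P) (lam *\<^sub>R \<Gamma>)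
            (- (lam *\<^sub>R transpose \<Gamma>)) (\<kappa> *\<^sub>R Psi_mat X P)"

end

theory Submission imports Defs begin

lemma mm_add_r: "((A::real^'b^'a) + B) ** (C::real^'c^'b) = A ** C + B ** C"
  by (simp add: matrix_matrix_mult_def vec_eq_iff sum.distrib algebra_simps)
lemma mm_add_l: "(A::real^'b^'a) ** ((B::real^'c^'b) + C) = A ** B + A ** C"
  by (simp add: matrix_matrix_mult_def vec_eq_iff sum.distrib algebra_simps)
lemma mm_diff_r: "((A::real^'b^'a) - B) ** (C::real^'c^'b) = A ** C - B ** C"
  by (simp add: matrix_matrix_mult_def vec_eq_iff sum_subtractf algebra_simps)
lemma mm_diff_l: "(A::real^'b^'a) ** ((B::real^'c^'b) - C) = A ** B - A ** C"
  by (simp add: matrix_matrix_mult_def vec_eq_iff sum_subtractf algebra_simps)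
lemma mm_neg_r: "(- (A::real^'b^'a)) ** (C::real^'c^'b) = - (A ** C)"
  by (simp add: matrix_matrix_mult_def vec_eq_iff sum_negf)
lemma mm_neg_l: "(A::real^'b^'a) ** (- (C::real^'c^'b)) = - (A ** C)"
  by (simp add: matrix_matrix_mult_def vec_eq_iff sum_negf)
lemma mm_scale_r: "(c *\<^sub>R (A::real^'b^'a)) ** (C::real^'c^'b) = c *\<^sub>R (A ** C)"
  by (simp add: matrix_matrix_mult_def vec_eq_iff sum_distrib_left algebra_simps)
lemma mm_scale_l: "(A::real^'b^'a) ** (c *\<^sub>R (C::real^'c^'b)) = c *\<^sub>R (A ** C)"
  by (simp add: matrix_matrix_mult_def vec_eq_iff sum_distrib_left algebra_simps)
lemma mm_zero_r: "(0::real^'b^'a) ** (C::real^'c^'b) = 0"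
  by (simp add: matrix_matrix_mult_def vec_eq_iff)
lemma mm_zero_l: "(A::real^'b^'a) ** (0::real^'c^'b) = 0"
  by (simp add: matrix_matrix_mult_def vec_eq_iff)
lemma tr_add: "transpose ((A::real^'b^'a) + B) = transpose A + transpose B"
  by (simp add: transpose_def vec_eq_iff)
lemma tr_diff: "transpose ((A::real^'b^'a) - B) = transpose A - transpose B"
  by (simp add: transpose_def vec_eq_iff)
lemma tr_neg: "transpose (- (A::real^'b^'a)) = - transpose A"
  by (simp add: transpose_def vec_eq_iff)
lemma tr_zero: "transpose (0::real^'b^'a) = 0"
  by (simp add: transpose_def vec_eq_iff)
lemma tr_mm: "transpose ((A::real^'b^'a) ** (B::real^'c^'b)) = transpose B ** transpose A"
  by (rule matrix_transpose_mul)

lemmas mm_simps = mm_add_r mm_add_l mm_diff_r mm_diff_l mm_neg_r mm_neg_l mm_scale_r mm_scale_l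
  mm_zero_r mm_zero_l tr_add tr_diff tr_neg tr_zero tr_mm transpose_scalar matrix_mul_assoc[symmetric]

lemma bl_tr: "bounded_linear (transpose :: real^'b^'a \<Rightarrow> real^'a^'b)"
  unfolding linear_conv_bounded_linear[symmetric]
  by (rule linearI) (simp_all add: tr_add transpose_scalar)

lemma bb_mm: "bounded_bilinear (\<lambda>(A::real^'b^'a) (B::real^'c^'b). A ** B)"
  unfolding bilinear_conv_bounded_bilinear[symmetric] bilinear_def
  by (auto intro!: linearI simp: mm_add_r mm_add_l mm_scale_r mm_scale_l)

lemma blockmat_eq: "blockmat A B C D = blockmat A' B' C' D' \<longleftrightarrow> A = A' \<and> B = B' \<and> C = C' \<and> D = D'"
proof
  assume h: "blockmat A B C D = blockmat A' B' C' D'"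
  have h: "\<And>i j. blockmat A B C D $ i $ j = blockmat A' B' C' D' $ i $ j" using h by simp
  show "A = A' \<and> B = B' \<and> C = C' \<and> D = D'"
    unfolding vec_eq_iff
    using h[of "Inl _" "Inl _"] h[of "Inl _" "Inr _"] h[of "Inr _" "Inl _"] h[of "Inr _" "Inr _"]
    by (simp add: blockmat_def)
qed simp

lemma blockmat_diff: "blockmat A B C D - blockmat A' B' C' D' = blockmat (A - A') (B - B') (C - C') (D - D')"
  by (simp add: blockmat_def vec_eq_iff split: sum.split)

lemma blockmat_mult:
  fixes A :: "real^'a^'a" and B :: "real^'b^'a" and C :: "real^'a^'b" and D :: "real^'b^'b"
  shows "blockmat A B C D ** blockmat A' B' C' D' =
    blockmat (A ** A' + B ** C') (A ** B' + B ** D') (C ** A' + D ** C') (C ** B' + D ** D')"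
proof -
  have U: "(UNIV :: ('a+'b) set) = UNIV <+> UNIV" by simp
  show ?thesis
    unfolding blockmat_def matrix_matrix_mult_def vec_eq_iff
    apply (simp only: U sum.Plus[OF finite finite])
    apply (auto split: sum.split simp: o_def)
    done
qed

lemma comm:
  fixes X P G :: "real^'r^'n"
  shows "Lax_L k G lam X P ** Lax_A k G lam X P - Lax_A k G lam X P ** Lax_L k G lam X P =
    blockmat (- (lam *\<^sub>R (X ** transpose G - G ** transpose X)))
             (k *\<^sub>R (X ** Psi_mat X P) + Phi_mat X P ** X)
             (transpose X ** Phi_mat X P + k *\<^sub>R (Psi_mat X P ** transpose X))
             (- (lam *\<^sub>R (transpose X ** G - transpose G ** X)))"
  unfolding Lax_L_def Lax_A_def blockmat_mult blockmat_diff blockmat_eq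
  by (simp add: mm_add_r mm_add_l mm_diff_r mm_diff_l mm_neg_r mm_neg_l mm_scale_r mm_scale_l
      algebra_simps power2_eq_square)

lemma d_mm:
  fixes f :: "real \<Rightarrow> real^'b^'a" and g :: "real \<Rightarrow> real^'c^'b"
  assumes "(f has_vector_derivative f') (at t)" "(g has_vector_derivative g') (at t)"
  shows "((\<lambda>s. f s ** g s) has_vector_derivative (f t ** g' + f' ** g t)) (at t)"
  using bounded_bilinear.has_vector_derivative[OF bb_mm assms] by simp

lemma d_tr:
  fixes f :: "real \<Rightarrow> real^'b^'a"
  assumes "(f has_vector_derivative f') (at t)"
  shows "((\<lambda>s. transpose (f s)) has_vector_derivative transpose f') (at t)"
  using bounded_linear.has_vector_derivative[OF bl_tr assms] .

lemma bl_b1: "bounded_linear (\<lambda>A. blockmat A 0 0 0)"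
  unfolding linear_conv_bounded_linear[symmetric]
  by (rule linearI) (simp_all add: blockmat_def vec_eq_iff split: sum.split)
lemma bl_b2: "bounded_linear (\<lambda>A. blockmat 0 A 0 0)"
  unfolding linear_conv_bounded_linear[symmetric]
  by (rule linearI) (simp_all add: blockmat_def vec_eq_iff split: sum.split)
lemma bl_b3: "bounded_linear (\<lambda>A. blockmat 0 0 A 0)"
  unfolding linear_conv_bounded_linear[symmetric]
  by (rule linearI) (simp_all add: blockmat_def vec_eq_iff split: sum.split)
lemma bl_b4: "bounded_linear (\<lambda>A. blockmat 0 0 0 A)"
  unfolding linear_conv_bounded_linear[symmetric]
  by (rule linearI) (simp_all add: blockmat_def vec_eq_iff split: sum.split)

lemma blockmat_split: "blockmat A B C D = blockmat A 0 0 0 + blockmat 0 B 0 0 + blockmat 0 0 C 0 + blockmat 0 0 0 D"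
  by (simp add: blockmat_def vec_eq_iff split: sum.split)

lemma d_block:
  assumes "(a has_vector_derivative a') (at t)" "(b has_vector_derivative b') (at t)"
    "(c has_vector_derivative c') (at t)" "(d has_vector_derivative d') (at t)"
  shows "((\<lambda>s. blockmat (a s) (b s) (c s) (d s)) has_vector_derivative blockmat a' b' c' d') (at t)"
proof -
  have "((\<lambda>s. blockmat (a s) 0 0 0 + blockmat 0 (b s) 0 0 + blockmat 0 0 (c s) 0 + blockmat 0 0 0 (d s))
     has_vector_derivative (blockmat a' 0 0 0 + blockmat 0 b' 0 0 + blockmat 0 0 c' 0 + blockmat 0 0 0 d')) (at t)"
    by (intro has_vector_derivative_add bounded_linear.has_vector_derivative[OF bl_b1] 
        bounded_linear.has_vector_derivative[OF bl_b2] bounded_linear.has_vector_derivative[OF bl_b3]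
        bounded_linear.has_vector_derivative[OF bl_b4] assms)
  thus ?thesis by (simp only: blockmat_split[symmetric])
qed

lemma dL:
  fixes X P :: "real \<Rightarrow> real^'r^'n" and G :: "real^'r^'n"
  assumes hX: "(X has_vector_derivative Xd) (at t)" and hP: "(P has_vector_derivative Pd) (at t)"
  shows "((\<lambda>s. Lax_L k G lam (X s) (P s)) has_vector_derivative
     blockmat (- (lam *\<^sub>R (P t ** transpose Xd + Pd ** transpose (X t) - (X t ** transpose Pd + Xd ** transpose (P t)))))
        Xd (- transpose Xd)
        ((lam * k) *\<^sub>R (transpose (X t) ** Pd + transpose Xd ** P t - (transpose (P t) ** Xd + transpose Pd ** X t)))) (at t)"
proof -
  note I = has_vector_derivative_minus has_vector_derivative_add has_vector_derivative_diff
      bounded_linear.has_vector_derivative[OF bounded_linear_scaleR_right]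
      d_mm d_tr hX hP
  have c: "((\<lambda>s. c) has_vector_derivative 0) (at t)" for c :: "real^'r^'n"  by simp
  have c2: "((\<lambda>s. c) has_vector_derivative 0) (at t)" for c :: "real^'n^'r"  by simp
  have 1: "((\<lambda>s. X s + lam\<^sup>2 *\<^sub>R G) has_vector_derivative Xd) (at t)"
    using has_vector_derivative_add[OF hX c] by simp
  have 2: "((\<lambda>s. - transpose (X s) - lam\<^sup>2 *\<^sub>R transpose G) has_vector_derivative - transpose Xd) (at t)"
    using has_vector_derivative_diff[OF has_vector_derivative_minus[OF d_tr[OF hX]] c2] by simp
  show ?thesis
  unfolding Lax_L_def Phi_mat_def Psi_mat_def
  by (rule d_block[OF _ 1 2]) (intro I)+
qed

lemma two_mat: "2 * (A::real^'a^'b) = 2 *\<^sub>R A"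
  by (simp add: vec_eq_iff)

lemma core_fwd:
  fixes X P G :: "real^'r^'n" and k :: real
  assumes c1: "transpose X ** X = mat 1" and c2: "transpose X ** P + transpose P ** X = 0"
  defines "Lam \<equiv> (1/2) *\<^sub>R (- 2 *\<^sub>R (transpose P ** P) + transpose X ** G + transpose G ** X)"
  defines "HX \<equiv> P - (1 + 2 * k) *\<^sub>R (X ** transpose P ** X)"
  defines "HP \<equiv> (1 + 2 * k) *\<^sub>R (P ** transpose X ** P) - G + X ** Lam"
  shows "k *\<^sub>R (X ** Psi_mat X P) + Phi_mat X P ** X = HX"
    and "P ** transpose HX + HP ** transpose X - (X ** transpose HP + HX ** transpose P) = X ** transpose G - G ** transpose X"
    and "transpose X ** HP + transpose HX ** P = (1/2) *\<^sub>R (transpose G ** X - transpose X ** G)"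
proof -
  have c1': "transpose X ** (X ** Y) = Y" for Y :: "real^'a^'r"
    by (simp add: matrix_mul_assoc c1)
  have c2a: "transpose X ** P = - (transpose P ** X)" using c2 by (simp add: eq_neg_iff_add_eq_0)
  have c2': "transpose X ** (P ** Y) = - (transpose P ** (X ** Y))" for Y :: "real^'a^'r"
    by (simp add: matrix_mul_assoc c2a mm_neg_r)
  note R = mm_simps c1 c1' c2a c2' two_mat
  show "k *\<^sub>R (X ** Psi_mat X P) + Phi_mat X P ** X = HX"
    unfolding HX_def Phi_mat_def Psi_mat_def by (simp add: R algebra_simps)
  show "P ** transpose HX + HP ** transpose X - (X ** transpose HP + HX ** transpose P) = X ** transpose G - G ** transpose X"
    unfolding HX_def HP_def Lam_def by (simp add: R algebra_simps)
  show "transpose X ** HP + transpose HX ** P = (1/2) *\<^sub>R (transpose G ** X - transpose X ** G)"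
    unfolding HX_def HP_def Lam_def by (simp add: R algebra_simps)
qed

lemma Q_zero:
  fixes X Q :: "real^'r^'n"
  assumes c1: "transpose X ** X = mat 1" and a: "Q ** transpose X = X ** transpose Q"
    and b: "transpose X ** Q + transpose Q ** X = 0"
  shows "Q = 0"
proof -
  have e1: "Q = X ** (transpose Q ** X)"
    by (metis a c1 matrix_mul_assoc matrix_mul_rid)
  have e2: "transpose X ** Q = transpose Q ** X"
    by (subst e1) (simp add: matrix_mul_assoc c1)
  have "(2::real) *\<^sub>R (transpose X ** Q) = 0" using b e2 by (simp add: scaleR_2)
  hence "transpose X ** Q = 0" by simp
  hence "transpose Q ** X = 0" using e2 by simp
  thus ?thesis using e1 by (simp add: mm_zero_l)
qed

lemma core:
  fixes X P G Xd Pd :: "real^'r^'n" and k :: real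
  assumes c1: "transpose X ** X = mat 1" and c2: "transpose X ** P + transpose P ** X = 0"
    and c3: "transpose X ** Pd + transpose Xd ** P + (transpose P ** Xd + transpose Pd ** X) = 0"
    and ks: "k = 1 \<or> G = 0"
  defines "Lam \<equiv> (1/2) *\<^sub>R (- 2 *\<^sub>R (transpose P ** P) + transpose X ** G + transpose G ** X)"
  defines "HX \<equiv> P - (1 + 2 * k) *\<^sub>R (X ** transpose P ** X)"
  defines "HP \<equiv> (1 + 2 * k) *\<^sub>R (P ** transpose X ** P) - G + X ** Lam"
  shows "(Xd = HX \<and> Pd = HP) \<longleftrightarrow>
    (\<forall>lam. blockmat (- (lam *\<^sub>R (P ** transpose Xd + Pd ** transpose X - (X ** transpose Pd + Xd ** transpose P))))
        Xd (- transpose Xd)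
        ((lam * k) *\<^sub>R (transpose X ** Pd + transpose Xd ** P - (transpose P ** Xd + transpose Pd ** X)))
     = blockmat (- (lam *\<^sub>R (X ** transpose G - G ** transpose X)))
             (k *\<^sub>R (X ** Psi_mat X P) + Phi_mat X P ** X)
             (transpose X ** Phi_mat X P + k *\<^sub>R (Psi_mat X P ** transpose X))
             (- (lam *\<^sub>R (transpose X ** G - transpose G ** X))))"
    (is "?A \<longleftrightarrow> ?B")
proof -
  have F1: "k *\<^sub>R (X ** Psi_mat X P) + Phi_mat X P ** X = HX"
    unfolding HX_def by (rule core_fwd(1)[OF c1 c2])
  have F2: "P ** transpose HX + HP ** transpose X - (X ** transpose HP + HX ** transpose P) = X ** transpose G - G ** transpose X"
    unfolding HX_def HP_def Lam_def by (rule core_fwd(2)[OF c1 c2])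
  have F3: "transpose X ** HP + transpose HX ** P = (1/2) *\<^sub>R (transpose G ** X - transpose X ** G)"
    unfolding HX_def HP_def Lam_def by (rule core_fwd(3)[OF c1 c2])
  note F = F1 F2 F3
  have T: "transpose X ** Phi_mat X P + k *\<^sub>R (Psi_mat X P ** transpose X)
       = - transpose (k *\<^sub>R (X ** Psi_mat X P) + Phi_mat X P ** X)"
    unfolding Phi_mat_def Psi_mat_def by (simp add: mm_simps algebra_simps)
  show ?thesis
  proof
    assume A: ?A
    have psi: "transpose X ** Pd + transpose Xd ** P - (transpose P ** Xd + transpose Pd ** X)
        = transpose G ** X - transpose X ** G"
    proof -
      have "transpose X ** Pd + transpose Xd ** P - (transpose P ** Xd + transpose Pd ** X)
          = (transpose X ** HP + transpose HX ** P) - transpose (transpose X ** HP + transpose HX ** P)"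
        using A by (simp add: mm_simps algebra_simps)
      also have "\<dots> = transpose G ** X - transpose X ** G"
        unfolding F(3) by (simp add: mm_simps algebra_simps)
      finally show ?thesis .
    qed
    have psik: "k *\<^sub>R (transpose G ** X - transpose X ** G) = transpose G ** X - transpose X ** G"
      using ks by (auto simp: mm_simps)
    show ?B
    proof
      fix lam
      show "blockmat (- (lam *\<^sub>R (P ** transpose Xd + Pd ** transpose X - (X ** transpose Pd + Xd ** transpose P))))
        Xd (- transpose Xd)
        ((lam * k) *\<^sub>R (transpose X ** Pd + transpose Xd ** P - (transpose P ** Xd + transpose Pd ** X)))
       = blockmat (- (lam *\<^sub>R (X ** transpose G - G ** transpose X)))
             (k *\<^sub>R (X ** Psi_mat X P) + Phi_mat X P ** X)
             (transpose X ** Phi_mat X P + k *\<^sub>R (Psi_mat X P ** transpose X))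
             (- (lam *\<^sub>R (transpose X ** G - transpose G ** X)))"
      proof -
        have p4: "(lam * k) *\<^sub>R (transpose G ** X - transpose X ** G) = - (lam *\<^sub>R (transpose X ** G - transpose G ** X))"
        proof -
          have "(lam * k) *\<^sub>R (transpose G ** X - transpose X ** G) = lam *\<^sub>R (k *\<^sub>R (transpose G ** X - transpose X ** G))" by simp
          also have "\<dots> = lam *\<^sub>R (transpose G ** X - transpose X ** G)" using psik by simp
          also have "\<dots> = - (lam *\<^sub>R (transpose X ** G - transpose G ** X))" by (simp add: scaleR_diff_right)
          finally show ?thesis .
        qed
        show ?thesis
          unfolding blockmat_eq T psi F(1) p4 using A F(2) by simp
      qed
    qed
  next
    assume B: ?B
    note E = B[rule_format, of 1, unfolded blockmat_eq scaleR_one F(1)]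
    have e1: "P ** transpose Xd + Pd ** transpose X - (X ** transpose Pd + Xd ** transpose P)
        = X ** transpose G - G ** transpose X" using conjunct1[OF E] by (simp only: neg_equal_iff_equal)
    have e2: "Xd = HX" using conjunct1[OF conjunct2[OF E]] .
    define Q where "Q = Pd - HP"
    have a: "Q ** transpose X = X ** transpose Q"
    proof -
      have "P ** transpose Xd + Pd ** transpose X - (X ** transpose Pd + Xd ** transpose P)
         - (P ** transpose HX + HP ** transpose X - (X ** transpose HP + HX ** transpose P)) = 0"
        using e1 F(2) by simp
      moreover have "P ** transpose Xd + Pd ** transpose X - (X ** transpose Pd + Xd ** transpose P)
         - (P ** transpose HX + HP ** transpose X - (X ** transpose HP + HX ** transpose P))
         = Q ** transpose X - X ** transpose Q"
        unfolding Q_def e2 by (simp add: mm_simps algebra_simps)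
      ultimately show ?thesis by simp
    qed
    have b: "transpose X ** Q + transpose Q ** X = 0"
    proof -
      have "transpose X ** HP + transpose HX ** P + transpose (transpose X ** HP + transpose HX ** P) = 0"
        unfolding F(3) by (simp add: mm_simps algebra_simps)
      hence "transpose X ** Pd + transpose Xd ** P + (transpose P ** Xd + transpose Pd ** X)
           - (transpose X ** HP + transpose HX ** P + transpose (transpose X ** HP + transpose HX ** P)) = 0"
        using c3 by simp
      moreover have "transpose X ** Pd + transpose Xd ** P + (transpose P ** Xd + transpose Pd ** X)
           - (transpose X ** HP + transpose HX ** P + transpose (transpose X ** HP + transpose HX ** P))
           = transpose X ** Q + transpose Q ** X"
        unfolding Q_def e2 by (simp add: mm_simps algebra_simps)
      ultimately show ?thesis by simp
    qed
    have "Q = 0" by (rule Q_zero[OF c1 a b])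
    thus ?A using e2 unfolding Q_def by simp
  qed
qed

theorem theorem4:
  fixes \<kappa> :: real and \<Gamma> :: "real^'r^'n"
    and X P :: "real \<Rightarrow> real^'r^'n"
  assumes kappa: "\<kappa> > -1"
    and case_split: "\<kappa> = 1 \<or> \<Gamma> = 0"
    and on_TV: "\<forall>t. in_TStiefel (X t) (P t)"
    and X_diff: "\<forall>t. X differentiable (at t)"
    and P_diff: "\<forall>t. P differentiable (at t)"
  shows "(\<forall>t. (X has_vector_derivative
                  (P t - (1 + 2 * \<kappa>) *\<^sub>R (X t ** transpose (P t) ** X t))) (at t)
            \<and> (P has_vector_derivative
                  ((1 + 2 * \<kappa>) *\<^sub>R (P t ** transpose (X t) ** P t) - \<Gamma>
                   + X t ** ((1/2) *\<^sub>R (- 2 *\<^sub>R (transpose (P t) ** P t)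
                        + transpose (X t) ** \<Gamma> + transpose \<Gamma> ** X t)))) (at t))
     \<longleftrightarrow>
     (\<forall>lam t. ((\<lambda>s. Lax_L \<kappa> \<Gamma> lam (X s) (P s)) has_vector_derivative
               (Lax_L \<kappa> \<Gamma> lam (X t) (P t) ** Lax_A \<kappa> \<Gamma> lam (X t) (P t)
                - Lax_A \<kappa> \<Gamma> lam (X t) (P t) ** Lax_L \<kappa> \<Gamma> lam (X t) (P t))) (at t))"
proof -
  define Xd where "Xd t = vector_derivative X (at t)" for t
  define Pd where "Pd t = vector_derivative P (at t)" for t
  have hX: "(X has_vector_derivative Xd t) (at t)" for t
    using X_diff vector_derivative_works unfolding Xd_def by blast
  have hP: "(P has_vector_derivative Pd t) (at t)" for t
    using P_diff vector_derivative_works unfolding Pd_def by blast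
  have c1: "transpose (X t) ** X t = mat 1" for t using on_TV unfolding in_TStiefel_def by blast
  have c2: "transpose (X t) ** P t + transpose (P t) ** X t = 0" for t using on_TV unfolding in_TStiefel_def by blast
  have c3: "transpose (X t) ** Pd t + transpose (Xd t) ** P t + (transpose (P t) ** Xd t + transpose (Pd t) ** X t) = 0" for t
  proof -
    have d: "((\<lambda>s. transpose (X s) ** P s + transpose (P s) ** X s) has_vector_derivative
      (transpose (X t) ** Pd t + transpose (Xd t) ** P t + (transpose (P t) ** Xd t + transpose (Pd t) ** X t))) (at t)"
      by (intro has_vector_derivative_add d_mm d_tr hX hP)
    have e: "(\<lambda>s. transpose (X s) ** P s + transpose (P s) ** X s) = (\<lambda>s. 0)" using c2 by auto
    have "((\<lambda>s. transpose (X s) ** P s + transpose (P s) ** X s) has_vector_derivative 0) (at t)"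
      unfolding e by simp
    from vector_derivative_unique_at[OF d this] show ?thesis .
  qed
  have uq: "(f has_vector_derivative v) (at t) \<longleftrightarrow> v = w" if "(f has_vector_derivative w) (at t)" for f :: "real \<Rightarrow> real^'r^'n" and v w t
    using that vector_derivative_unique_at by blast
  have uq2: "(f has_vector_derivative v) (at t) \<longleftrightarrow> v = w" if "(f has_vector_derivative w) (at t)" for f :: "real \<Rightarrow> real^('n+'r)^('n+'r)" and v w t
    using that vector_derivative_unique_at by metis
  show ?thesis
    unfolding uq[OF hX] uq[OF hP] uq2[OF dL[OF hX hP]] comm
    using core[OF c1 c2 c3 case_split] by (metis (no_types, lifting))
qed

end
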